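(* Let $D$ and $D'$ be finite subsets of $[0,1]\times\mathbb{R}$ (the fitting and external datasets) such that the inputs of all samples in $D\cup D'$ are pairwise distinct. Let $\epsilon>0$. Then there exist a subset $A\subseteq D'$ and $a>0$ such that the TNN constructed from the dataset $D\cup A$ (with parameter $a$) satisfies $|y-TNN(x)|<\epsilon$ for every $(x,y)\in D\cup D'$. In particular, all samples of $D$ remain approximated within $\epsilon$ after the model is rebuilt with the added samples of $A$.
   Context: Let $\sigma(t)=1/(1+e^{-t})$. For a finite dataset $\{(x^{(k)},y^{(k)})\}_{k=1}^N\subset[0,1]\times\mathbb{R}$ with pairwise distinct inputs, index it so that $x^{(1)}>x^{(2)}>\dots>x^{(N)}$. Set $\Delta^{(k)}=x^{(k)}-x^{(k+1)}$ for $k<N$ and let $\Delta^{(N)}>0$ be an arbitrary fixed positive number. For $a>0$ put $W_{N-k+1}=2a/\Delta^{(k)}$, $b_{N-k+1}=a-W_{N-k+1}x^{(k)}$, $\alpha_i=y^{(N-i+1)}-y^{(N-i+2)}$ (with $y^{(N+1)}:=0$), and define the TNN constructed from this dataset as $TNN(x)=\sum_{i=1}^N\alpha_i\sigma(W_ix+b_i)$. *)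

theory Defs
  imports Complex_Main
begin

definition sigmoid :: "real \<Rightarrow> real" where
  "sigmoid t = 1 / (1 + exp (- t))"

text \<open>A dataset is a finite set of samples (x,y) with pairwise distinct inputs.
  Samples are indexed 1..N so that x^(1) > x^(2) > ... > x^(N).\<close>

definition ds_N :: "(real \<times> real) set \<Rightarrow> nat" where
  "ds_N S = card S"

definition ds_x :: "(real \<times> real) set \<Rightarrow> nat \<Rightarrow> real" where
  "ds_x S k = rev (sorted_list_of_set (fst ` S)) ! (k - 1)"

definition ds_y :: "(real \<times> real) set \<Rightarrow> nat \<Rightarrow> real" where
  "ds_y S k = (if 1 \<le> k \<and> k \<le> ds_N S then (THE y. (ds_x S k, y) \<in> S) else 0)"

definition ds_Delta :: "(real \<times> real) set \<Rightarrow> real \<Rightarrow> nat \<Rightarrow> real" where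
  "ds_Delta S dN k = (if k < ds_N S then ds_x S k - ds_x S (k + 1) else dN)"

definition tnn_W :: "(real \<times> real) set \<Rightarrow> real \<Rightarrow> real \<Rightarrow> nat \<Rightarrow> real" where
  "tnn_W S dN a i = 2 * a / ds_Delta S dN (ds_N S - i + 1)"

definition tnn_b :: "(real \<times> real) set \<Rightarrow> real \<Rightarrow> real \<Rightarrow> nat \<Rightarrow> real" where
  "tnn_b S dN a i = a - tnn_W S dN a i * ds_x S (ds_N S - i + 1)"

definition tnn_alpha :: "(real \<times> real) set \<Rightarrow> nat \<Rightarrow> real" where
  "tnn_alpha S i = ds_y S (ds_N S - i + 1) - ds_y S (ds_N S - i + 2)"

definition TNN :: "(real \<times> real) set \<Rightarrow> real \<Rightarrow> real \<Rightarrow> real \<Rightarrow> real" where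
  "TNN S dN a x = (\<Sum>i = 1..ds_N S. tnn_alpha S i * sigmoid (tnn_W S dN a i * x + tnn_b S dN a i))"

end

theory Submission
  imports Defs
begin

lemma ds_N_len:
  assumes "finite S" "inj_on fst S"
  shows "ds_N S = length (rev (sorted_list_of_set (fst ` S)))"
  using assms by (simp add: ds_N_def card_image)

lemma ds_x_mono:
  assumes "finite S" "inj_on fst S" "1 \<le> i" "i < j" "j \<le> ds_N S"
  shows "ds_x S j < ds_x S i"
proof -
  let ?xs = "rev (sorted_list_of_set (fst ` S))"
  have "sorted_wrt (<) (sorted_list_of_set (fst ` S))"
    by (rule strict_sorted_list_of_set)
  hence "sorted_wrt (>) ?xs" by (simp add: sorted_wrt_rev)
  moreover have "j - 1 < length ?xs" using assms ds_N_len[OF assms(1,2)] by simp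
  moreover have "i - 1 < j - 1" using assms by simp
  ultimately have "?xs ! (i-1) > ?xs ! (j-1)" using sorted_wrt_nth_less by blast
  thus ?thesis by (simp add: ds_x_def)
qed

lemma ds_x_mono_le:
  assumes "finite S" "inj_on fst S" "1 \<le> i" "i \<le> j" "j \<le> ds_N S"
  shows "ds_x S j \<le> ds_x S i"
  using ds_x_mono[OF assms(1,2,3) _ assms(5)] assms(4) by (cases "i = j") auto

lemma ds_mem:
  assumes "finite S" "inj_on fst S" "(x, y) \<in> S"
  shows "\<exists>j. 1 \<le> j \<and> j \<le> ds_N S \<and> x = ds_x S j \<and> y = ds_y S j"
proof -
  let ?xs = "rev (sorted_list_of_set (fst ` S))"
  have "x \<in> set ?xs" using assms by force
  then obtain i where i: "i < length ?xs" "?xs ! i = x" by (metis in_set_conv_nth)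
  define j where "j = Suc i"
  have j: "1 \<le> j" "j \<le> ds_N S" using i ds_N_len[OF assms(1,2)] by (auto simp: j_def)
  have xj: "x = ds_x S j" using i by (simp add: ds_x_def j_def)
  have "(THE y. (ds_x S j, y) \<in> S) = y"
  proof (rule the_equality)
    show "(ds_x S j, y) \<in> S" using xj assms by simp
    fix y' assume "(ds_x S j, y') \<in> S"
    with assms(2,3) xj show "y' = y" by (metis fst_conv inj_on_def prod.inject)
  qed
  hence "y = ds_y S j" using j by (simp add: ds_y_def)
  with j xj show ?thesis by blast
qed

lemma sigmoid_mono: "s \<le> t \<Longrightarrow> sigmoid s \<le> sigmoid t"
  unfolding sigmoid_def by (simp add: frac_le add_pos_pos)

lemma sigmoid_pos: "sigmoid t > 0"
  unfolding sigmoid_def by (simp add: add_pos_pos)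

lemma sigmoid_neg: "1 - sigmoid t = sigmoid (- t)"
proof -
  have p: "exp t > 0" by simp
  have "1 / (1 + exp (- t)) = exp t / (1 + exp t)"
    using p by (simp add: exp_minus field_simps)
  moreover have "1 / (1 + exp t) + exp t / (1 + exp t) = (1 + exp t) / (1 + exp t)"
    by (rule add_divide_distrib[symmetric])
  moreover have "(1 + exp t) / (1 + exp t) = 1" using p by (metis add_pos_pos divide_self_if less_irrefl zero_less_one)
  ultimately show ?thesis unfolding sigmoid_def minus_minus by linarith
qed

lemma TNN_rewrite:
  "TNN S dN a x = (\<Sum>k=1..ds_N S. (ds_y S k - ds_y S (k+1)) *
      sigmoid (a + 2*a/ds_Delta S dN k * (x - ds_x S k)))"
proof -
  let ?N = "ds_N S"
  have "TNN S dN a x = (\<Sum>i = 1..?N. tnn_alpha S (?N + 1 - i) *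
      sigmoid (tnn_W S dN a (?N + 1 - i) * x + tnn_b S dN a (?N + 1 - i)))"
    unfolding TNN_def by (subst sum.atLeastAtMost_rev) simp
  also have "\<dots> = (\<Sum>k=1..?N. (ds_y S k - ds_y S (k+1)) *
      sigmoid (a + 2*a/ds_Delta S dN k * (x - ds_x S k)))"
  proof (rule sum.cong)
    fix k assume k: "k \<in> {1..?N}"
    have e1: "?N - (?N + 1 - k) + 1 = k" and e2: "?N - (?N + 1 - k) + 2 = k + 1" using k by auto
    show "tnn_alpha S (?N + 1 - k) *
      sigmoid (tnn_W S dN a (?N + 1 - k) * x + tnn_b S dN a (?N + 1 - k)) =
      (ds_y S k - ds_y S (k+1)) * sigmoid (a + 2*a/ds_Delta S dN k * (x - ds_x S k))"
    proof -
      have arg: "2 * a / ds_Delta S dN k * x + (a - 2 * a / ds_Delta S dN k * ds_x S k)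
          = a + 2*a/ds_Delta S dN k * (x - ds_x S k)"
        using right_diff_distrib[of "2*a/ds_Delta S dN k" x "ds_x S k"] by linarith
      show ?thesis unfolding tnn_alpha_def tnn_W_def tnn_b_def e1 e2 arg by simp
    qed
  qed simp
  finally show ?thesis .
qed


lemma Delta_pos:
  assumes "finite S" "inj_on fst S" "dN > 0" "1 \<le> k" "k \<le> ds_N S"
  shows "ds_Delta S dN k > 0"
  using assms ds_x_mono[OF assms(1,2), of k "k+1"] by (auto simp: ds_Delta_def)

lemma term_bound:
  assumes "finite S" "inj_on fst S" "dN > 0" "a > 0"
    and j: "1 \<le> j" "j \<le> ds_N S" and k: "1 \<le> k" "k \<le> ds_N S"
  shows "\<bar>(if j \<le> k then 1 else 0) - sigmoid (a + 2*a/ds_Delta S dN k * (ds_x S j - ds_x S k))\<bar>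
         \<le> sigmoid (- a)"
proof -
  let ?D = "ds_Delta S dN k"
  let ?z = "a + 2*a/?D * (ds_x S j - ds_x S k)"
  have D: "?D > 0" using Delta_pos[OF assms(1,2,3) k] .
  show ?thesis
  proof (cases "j \<le> k")
    case True
    have "ds_x S k \<le> ds_x S j" using ds_x_mono_le[OF assms(1,2) j(1) True k(2)] .
    hence "2*a/?D * (ds_x S j - ds_x S k) \<ge> 0" using D assms(4) by simp
    hence "?z \<ge> a" by simp
    hence "sigmoid (- ?z) \<le> sigmoid (- a)" by (intro sigmoid_mono) simp
    moreover have "1 - sigmoid ?z = sigmoid (- ?z)" by (rule sigmoid_neg)
    moreover have "sigmoid (- ?z) > 0" by (rule sigmoid_pos)
    ultimately show ?thesis using True by simp
  next
    case False
    hence kN: "k < ds_N S" using j by simp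
    have DD: "?D = ds_x S k - ds_x S (k+1)" using kN by (simp add: ds_Delta_def)
    have "ds_x S j \<le> ds_x S (k+1)" using ds_x_mono_le[OF assms(1,2), of "k+1" j] False j by simp
    hence le: "ds_x S j - ds_x S k \<le> - ?D" using DD by simp
    have "2*a/?D * (ds_x S j - ds_x S k) \<le> 2*a/?D * (- ?D)"
      using mult_left_mono[OF le, of "2*a/?D"] D assms(4) by simp
    also have "\<dots> = -2*a" using D by simp
    finally have "?z \<le> - a" by simp
    hence "sigmoid ?z \<le> sigmoid (- a)" by (rule sigmoid_mono)
    moreover have "sigmoid ?z > 0" by (rule sigmoid_pos)
    ultimately show ?thesis using False by simp
  qed
qed

lemma err_bound:
  assumes "finite S" "inj_on fst S" "dN > 0" "a > 0"
    and j: "1 \<le> j" "j \<le> ds_N S"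
  shows "\<bar>ds_y S j - TNN S dN a (ds_x S j)\<bar>
     \<le> (\<Sum>k=1..ds_N S. \<bar>ds_y S k - ds_y S (k+1)\<bar>) * sigmoid (- a)"
proof -
  let ?N = "ds_N S"
  let ?y = "ds_y S"
  define c where "c k = ?y k - ?y (k+1)" for k
  define z where "z k = a + 2*a/ds_Delta S dN k * (ds_x S j - ds_x S k)" for k
  define ind where "ind k = (if j \<le> k then 1 else (0::real))" for k
  have "(\<Sum>k=1..?N. c k * ind k) = (\<Sum>k=j..?N. c k * ind k)"
    by (rule sum.mono_neutral_right) (use j in \<open>auto simp: ind_def\<close>)
  also have "\<dots> = (\<Sum>k=j..?N. ?y k - ?y (Suc k))"
    by (rule sum.cong) (auto simp: ind_def c_def)
  also have "\<dots> = - (\<Sum>k=j..?N. ?y (Suc k) - ?y k)"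
    by (simp add: sum_negf[symmetric])
  also have "\<dots> = ?y j - ?y (Suc ?N)"
    using sum_Suc_diff[of j ?N ?y] j by simp
  also have "?y (Suc ?N) = 0" by (simp add: ds_y_def)
  finally have yj: "?y j = (\<Sum>k=1..?N. c k * ind k)" by simp
  have T: "TNN S dN a (ds_x S j) = (\<Sum>k=1..?N. c k * sigmoid (z k))"
    unfolding TNN_rewrite c_def z_def by simp
  have "\<bar>?y j - TNN S dN a (ds_x S j)\<bar> = \<bar>\<Sum>k=1..?N. c k * (ind k - sigmoid (z k))\<bar>"
    unfolding yj T by (simp add: sum_subtractf right_diff_distrib)
  also have "\<dots> \<le> (\<Sum>k=1..?N. \<bar>c k * (ind k - sigmoid (z k))\<bar>)" by (rule sum_abs)
  also have "\<dots> \<le> (\<Sum>k=1..?N. \<bar>c k\<bar> * sigmoid (- a))"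
  proof (rule sum_mono)
    fix k assume "k \<in> {1..?N}"
    hence "\<bar>ind k - sigmoid (z k)\<bar> \<le> sigmoid (- a)"
      unfolding ind_def z_def using term_bound[OF assms] by auto
    thus "\<bar>c k * (ind k - sigmoid (z k))\<bar> \<le> \<bar>c k\<bar> * sigmoid (- a)"
      by (simp add: abs_mult mult_left_mono)
  qed
  also have "\<dots> = (\<Sum>k=1..?N. \<bar>?y k - ?y (k+1)\<bar>) * sigmoid (- a)"
    by (simp add: sum_distrib_right c_def)
  finally show ?thesis .
qed

theorem proposition2:
  fixes D D' :: "(real \<times> real) set" and \<epsilon> dN :: real
  assumes "finite D" and "finite D'"
    and "D \<subseteq> {0..1} \<times> UNIV" and "D' \<subseteq> {0..1} \<times> UNIV"
    and "inj_on fst (D \<union> D')"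
    and "\<epsilon> > 0" and "dN > 0"
  shows "\<exists>A \<subseteq> D'. \<exists>a > 0. \<forall>(x, y) \<in> D \<union> D'. \<bar>y - TNN (D \<union> A) dN a x\<bar> < \<epsilon>"
proof -
  let ?S = "D \<union> D'"
  have fin: "finite ?S" using assms by simp
  define M where "M = (\<Sum>k=1..ds_N ?S. \<bar>ds_y ?S k - ds_y ?S (k+1)\<bar>)"
  define a where "a = M / \<epsilon> + 1"
  have M0: "M \<ge> 0" unfolding M_def by (rule sum_nonneg) simp
  have "M / \<epsilon> \<ge> 0" using M0 assms(6) by simp
  hence a0: "a > 0" unfolding a_def by linarith
  have sa: "sigmoid (- a) \<le> 1 / (2 + a)"
  proof -
    have "1 + a \<le> exp a" by (rule exp_ge_add_one_self)
    thus ?thesis unfolding sigmoid_def using a0 by (simp add: frac_le)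
  qed
  have bound: "M * sigmoid (- a) < \<epsilon>"
  proof -
    have "M * sigmoid (- a) \<le> M / (2 + a)"
      using mult_left_mono[OF sa M0] by simp
    also have "\<dots> < \<epsilon>"
    proof -
      have "\<epsilon> * (2 + a) = M + 3 * \<epsilon>" unfolding a_def using assms(6) by (simp add: field_simps)
      hence "M < \<epsilon> * (2 + a)" using assms(6) by simp
      thus ?thesis using a0 by (simp add: divide_less_eq)
    qed
    finally show ?thesis .
  qed
  show ?thesis
  proof (intro exI[of _ D'] conjI exI[of _ a] ballI)
    show "D' \<subseteq> D'" by simp
    show "a > 0" by (rule a0)
    fix p assume p: "p \<in> ?S"
    obtain x y where xy: "p = (x, y)" by fastforce
    obtain j where j: "1 \<le> j" "j \<le> ds_N ?S" "x = ds_x ?S j" "y = ds_y ?S j"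
      using ds_mem[OF fin assms(5)] p xy by blast
    have "\<bar>y - TNN ?S dN a x\<bar> \<le> M * sigmoid (- a)"
      unfolding j(3,4) M_def by (rule err_bound[OF fin assms(5) assms(7) a0 j(1,2)])
    with bound have "\<bar>y - TNN ?S dN a x\<bar> < \<epsilon>" by simp
    thus "case p of (x, y) \<Rightarrow> \<bar>y - TNN (D \<union> D') dN a x\<bar> < \<epsilon>" using xy by simp
  qed
qed

end
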